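(* Let $\mathsf B=(E,\mapsto,\#)$ be a bundle event structure such that every event $e\in E$ belongs to some finite configuration of $\mathsf B$. Define the net $U=\langle S,E,F,\mathsf m\rangle$ by $S=\{(e,\ast)\mid e\in E\}\cup\{\{e,e'\}\mid e\ \#\ e'\}\cup\{(Y,e)\mid Y\mapsto e\}\cup\{(\ast,e)\mid e\in E\}$, $F=\{(s,e)\mid s=(e,\ast)\ \lor\ s=(Y,e)\ \lor\ (s=\{e,e'\}\text{ for some }e')\}\cup\{(e,s)\mid s=(\ast,e)\ \lor\ (s=(Y,e')\land e\in Y)\}$, $\mathsf m=\{(e,\ast)\mid e\in E\}\cup\{\{e,e'\}\mid e\ \#\ e'\}$ (one token in each listed place). Then $U$ is an unravel net, and a finite set $X\subseteq E$ is a configuration of $\mathsf B$ if and only if $X$ is a state of $U$.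
   Context: A bundle event structure is a triple $\mathsf B=(E,\mapsto,\#)$ where $E$ is a set of events, $\#\subseteq E\times E$ is an irreflexive symmetric conflict relation, and $\mapsto\subseteq \mathcal P_{\mathrm{fin}}(E)\times E$ is the enabling (bundle) relation such that if $X\mapsto e$ then any two distinct elements of $X$ are in conflict, and for each $e$ the set $\bigcup\{X\mid X\mapsto e\}$ is finite. A set $X\subseteq E$ is a configuration of $\mathsf B$ if it is conflict free (no two distinct elements in conflict) and there is an enumeration $e_1,e_2,\dots$ of $X$ such that for every $i$ and every bundle $Z\mapsto e_i$ one has $Z\cap\{e_1,\dots,e_{i-1}\}\neq\emptyset$. A net $N=\langle S,T,F,\mathsf m\rangle$ consists of disjoint sets $S$ (places) and $T$ (transitions), flow relation $F\subseteq (S\times T)\cup(T\times S)$ and initial marking $\mathsf m$; ${}^\bullet x=\{y\mid (y,x)\in F\}$, $x^\bullet=\{y\mid (x,y)\in F\}$. A transition $t$ is enabled at marking $m$ if ${}^\bullet t\subseteq m$; firing yields $m-{}^\bullet t+t^\bullet$. A state is the multiset of transitions of a finite firing sequence from $\mathsf m$; $\mathrm{St}(N)$ is the set of states and $\lfloor X\rfloor$ the support of a multiset $X$. A net is safe if every reachable marking has at most one token per place. The subnet generated by $T'\subseteq T$ has transitions $T'$, the places connected by $F$ to some transition of $T'$, and $F$ and $\mathsf m$ restricted accordingly. A net is conflict-free if $|s^\bullet|\le1$ for every place $s$, and acyclic if the reflexive transitive closure of $F$ is a partial order. An unravel net is a safe net $U$ such that (i) for each $X\in\mathrm{St}(U)$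 the subnet generated by $\lfloor X\rfloor$ is acyclic and conflict-free, and (ii) every transition belongs to $\lfloor X\rfloor$ for some state $X$. *)

theory Defs
  imports Main "HOL-Library.Multiset"
begin

text \<open>A bundle event structure is given by events E, enabling (bundle) relation bun
  (pairs (X, e) meaning X |-> e) and conflict relation conf.\<close>

definition bes :: "'e set \<Rightarrow> ('e set \<times> 'e) set \<Rightarrow> 'e rel \<Rightarrow> bool" where
  "bes E bun conf \<longleftrightarrow>
     conf \<subseteq> E \<times> E \<and> irrefl conf \<and> sym conf \<and>
     (\<forall>(X, e) \<in> bun. finite X \<and> X \<subseteq> E \<and> e \<in> E) \<and>
     (\<forall>(X, e) \<in> bun. \<forall>x\<in>X. \<forall>y\<in>X. x \<noteq> y \<longrightarrow> (x, y) \<in> conf) \<and>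
     (\<forall>e. finite (\<Union>{X. (X, e) \<in> bun}))"

definition conflict_free :: "'e rel \<Rightarrow> 'e set \<Rightarrow> bool" where
  "conflict_free conf X \<longleftrightarrow> (\<forall>x\<in>X. \<forall>y\<in>X. x \<noteq> y \<longrightarrow> (x, y) \<notin> conf)"

text \<open>Configuration: conflict free, and there is an enumeration e_0, e_1, ... (finite or
  infinite, indexed by a down-closed set I of naturals) such that every bundle of e_i
  meets the set of earlier events.\<close>

definition bes_config :: "'e set \<Rightarrow> ('e set \<times> 'e) set \<Rightarrow> 'e rel \<Rightarrow> 'e set \<Rightarrow> bool" where
  "bes_config E bun conf X \<longleftrightarrow>
     X \<subseteq> E \<and> conflict_free conf X \<and>
     (\<exists>(f :: nat \<Rightarrow> 'e) (I :: nat set).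
        (\<forall>i\<in>I. \<forall>j<i. j \<in> I) \<and> bij_betw f I X \<and>
        (\<forall>i\<in>I. \<forall>Z. (Z, f i) \<in> bun \<longrightarrow> Z \<inter> f ` {..<i} \<noteq> {}))"

text \<open>Places of type 'p and transitions of type 't (hence disjoint); the flow relation
  lives on the disjoint union of nodes; markings are functions to nat (possibly
  infinitely many tokens in total).\<close>

record ('p, 't) net =
  places :: "'p set"
  trans :: "'t set"
  flow :: "('p + 't) rel"
  init :: "'p \<Rightarrow> nat"

type_synonym 'p marking = "'p \<Rightarrow> nat"

definition is_net :: "('p, 't) net \<Rightarrow> bool" where
  "is_net N \<longleftrightarrow>
     flow N \<subseteq> (Inl ` places N \<times> Inr ` trans N) \<union> (Inr ` trans N \<times> Inl ` places N) \<and>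
     (\<forall>s. init N s > 0 \<longrightarrow> s \<in> places N)"

definition preset :: "('p, 't) net \<Rightarrow> 't \<Rightarrow> 'p set" where
  "preset N t = {s. (Inl s, Inr t) \<in> flow N}"

definition postset :: "('p, 't) net \<Rightarrow> 't \<Rightarrow> 'p set" where
  "postset N t = {s. (Inr t, Inl s) \<in> flow N}"

definition enabled :: "('p, 't) net \<Rightarrow> 'p marking \<Rightarrow> 't \<Rightarrow> bool" where
  "enabled N m t \<longleftrightarrow> t \<in> trans N \<and> (\<forall>s \<in> preset N t. 1 \<le> m s)"

definition fire :: "('p, 't) net \<Rightarrow> 'p marking \<Rightarrow> 't \<Rightarrow> 'p marking" where
  "fire N m t = (\<lambda>s. m s - (if s \<in> preset N t then 1 else 0)
                      + (if s \<in> postset N t then 1 else 0))"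

fun fireseq :: "('p, 't) net \<Rightarrow> 'p marking \<Rightarrow> 't list \<Rightarrow> 'p marking \<Rightarrow> bool" where
  "fireseq N m [] m' \<longleftrightarrow> m' = m"
| "fireseq N m (t # ts) m' \<longleftrightarrow> enabled N m t \<and> fireseq N (fire N m t) ts m'"

definition reachable :: "('p, 't) net \<Rightarrow> 'p marking set" where
  "reachable N = {m. \<exists>ts. fireseq N (init N) ts m}"

definition states :: "('p, 't) net \<Rightarrow> 't multiset set" where
  "states N = {mset ts | ts. \<exists>m. fireseq N (init N) ts m}"

definition safe :: "('p, 't) net \<Rightarrow> bool" where
  "safe N \<longleftrightarrow> (\<forall>m \<in> reachable N. \<forall>s. m s \<le> 1)"

definition subnet :: "('p, 't) net \<Rightarrow> 't set \<Rightarrow> ('p, 't) net" where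
  "subnet N T' =
     (let P' = {s \<in> places N. \<exists>t\<in>T'. (Inl s, Inr t) \<in> flow N \<or> (Inr t, Inl s) \<in> flow N}
      in \<lparr> places = P', trans = T',
           flow = flow N \<inter> ((Inl ` P' \<times> Inr ` T') \<union> (Inr ` T' \<times> Inl ` P')),
           init = (\<lambda>s. if s \<in> P' then init N s else 0) \<rparr>)"

definition net_conflict_free :: "('p, 't) net \<Rightarrow> bool" where
  "net_conflict_free N \<longleftrightarrow>
     (\<forall>s \<in> places N. \<forall>t1 t2. (Inl s, Inr t1) \<in> flow N \<and> (Inl s, Inr t2) \<in> flow N \<longrightarrow> t1 = t2)"

text \<open>Acyclic: the reflexive transitive closure of F is a partial order (it is always
  reflexive and transitive, so this amounts to antisymmetry).\<close>
definition net_acyclic :: "('p, 't) net \<Rightarrow> bool" where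
  "net_acyclic N \<longleftrightarrow> antisym ((flow N)\<^sup>*)"

definition unravel_net :: "('p, 't) net \<Rightarrow> bool" where
  "unravel_net N \<longleftrightarrow>
     is_net N \<and> safe N \<and>
     (\<forall>X \<in> states N. net_acyclic (subnet N (set_mset X)) \<and>
                      net_conflict_free (subnet N (set_mset X))) \<and>
     (\<forall>t \<in> trans N. \<exists>X \<in> states N. t \<in># X)"

text \<open>PPre e = (e,*),  PConf {e,e'} = {e,e'},  PBun Y e = (Y,e),  PPost e = (*,e).\<close>
datatype 'e bplace = PPre 'e | PConf "'e set" | PBun "'e set" 'e | PPost 'e

definition bes_net :: "'e set \<Rightarrow> ('e set \<times> 'e) set \<Rightarrow> 'e rel \<Rightarrow> ('e bplace, 'e) net" where
  "bes_net E bun conf =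
     \<lparr> places = PPre ` E \<union> {PConf {e, e'} | e e'. (e, e') \<in> conf}
               \<union> {PBun Y e | Y e. (Y, e) \<in> bun} \<union> PPost ` E,
       trans = E,
       flow = {(Inl s, Inr e) | s e. e \<in> E \<and>
                 (s = PPre e \<or> (\<exists>Y. s = PBun Y e \<and> (Y, e) \<in> bun)
                  \<or> (\<exists>e'. s = PConf {e, e'} \<and> (e, e') \<in> conf))}
            \<union> {(Inr e, Inl s) | s e. e \<in> E \<and>
                 (s = PPost e \<or> (\<exists>Y e'. s = PBun Y e' \<and> (Y, e') \<in> bun \<and> e \<in> Y))},
       init = (\<lambda>s. if s \<in> PPre ` E \<union> {PConf {e, e'} | e e'. (e, e') \<in> conf} then 1 else 0) \<rparr>"

end

theory Submission
  imports Defs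
begin

definition MM :: "'e set \<Rightarrow> ('e set \<times> 'e) set \<Rightarrow> 'e rel \<Rightarrow> 'e list \<Rightarrow> 'e bplace \<Rightarrow> nat" where
 "MM E bun conf ts s = (case s of
     PPre e \<Rightarrow> if e \<in> E \<and> e \<notin> set ts then 1 else 0
   | PConf c \<Rightarrow> if (\<exists>e e'. c = {e,e'} \<and> (e,e') \<in> conf) \<and> c \<inter> set ts = {} then 1 else 0
   | PBun Y e \<Rightarrow> if (Y,e) \<in> bun \<and> Y \<inter> set ts \<noteq> {} \<and> e \<notin> set ts then 1 else 0
   | PPost e \<Rightarrow> if e \<in> set ts then 1 else 0)"

definition good :: "'e set \<Rightarrow> ('e set \<times> 'e) set \<Rightarrow> 'e rel \<Rightarrow> 'e list \<Rightarrow> bool" where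
 "good E bun conf ts \<longleftrightarrow> distinct ts \<and> set ts \<subseteq> E \<and> conflict_free conf (set ts) \<and>
    (\<forall>i<length ts. \<forall>Z. (Z, ts!i) \<in> bun \<longrightarrow> Z \<inter> set (take i ts) \<noteq> {})"

lemma preset_mem:
  "s \<in> preset (bes_net E bun conf) t \<longleftrightarrow> t \<in> E \<and> (s = PPre t \<or> (\<exists>Y. s = PBun Y t \<and> (Y,t) \<in> bun)
      \<or> (\<exists>e'. s = PConf {t,e'} \<and> (t,e') \<in> conf))"
  unfolding preset_def bes_net_def by auto

lemma postset_mem:
  "s \<in> postset (bes_net E bun conf) t \<longleftrightarrow> t \<in> E \<and> (s = PPost t \<or> (\<exists>Y e'. s = PBun Y e' \<and> (Y,e') \<in> bun \<and> t \<in> Y))"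
  unfolding postset_def bes_net_def by auto

lemma init_MM: "init (bes_net E bun conf) = MM E bun conf []"
  unfolding bes_net_def MM_def
  by (rule ext, case_tac x) auto

lemma trans_bes_net[simp]: "trans (bes_net E bun conf) = E"
  unfolding bes_net_def by simp

lemma good_prefix: "good E bun conf (ts @ [t]) \<Longrightarrow> good E bun conf ts"
  unfolding good_def conflict_free_def
  by (auto simp: nth_append)

lemma good_snoc:
  assumes "good E bun conf ts" "t \<in> E" "t \<notin> set ts"
    "\<forall>e'. (t,e') \<in> conf \<longrightarrow> e' \<notin> set ts"
    "\<forall>Z. (Z,t) \<in> bun \<longrightarrow> Z \<inter> set ts \<noteq> {}"
    "sym conf"
  shows "good E bun conf (ts @ [t])"
  using assms unfolding good_def conflict_free_def
  apply (auto simp: nth_append)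
  apply (metis symD)
  done

lemma bes_facts:
  assumes "bes E bun conf"
  shows "sym conf" "irrefl conf" "\<And>X e. (X,e) \<in> bun \<Longrightarrow> X \<subseteq> E"
    "\<And>X e x y. (X,e) \<in> bun \<Longrightarrow> x \<in> X \<Longrightarrow> y \<in> X \<Longrightarrow> x \<noteq> y \<Longrightarrow> (x,y) \<in> conf"
  using assms unfolding bes_def by auto

lemma step:
  assumes bes: "bes E bun conf" and g: "good E bun conf ts"
    and en: "enabled (bes_net E bun conf) (MM E bun conf ts) t"
  shows "good E bun conf (ts @ [t]) \<and> fire (bes_net E bun conf) (MM E bun conf ts) t = MM E bun conf (ts @ [t])"
proof -
  note bf = bes_facts[OF bes]
  have tE: "t \<in> E" using en unfolding enabled_def by simp
  have pre: "\<And>s. s \<in> preset (bes_net E bun conf) t \<Longrightarrow> 1 \<le> MM E bun conf ts s"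
    using en unfolding enabled_def by auto
  have t1: "t \<notin> set ts" using pre[of "PPre t"] tE by (auto simp: preset_mem MM_def)
  have t2: "\<forall>e'. (t,e') \<in> conf \<longrightarrow> e' \<notin> set ts"
  proof (intro allI impI)
    fix e' assume c: "(t,e') \<in> conf"
    have "1 \<le> MM E bun conf ts (PConf {t,e'})" using pre tE c by (auto simp: preset_mem)
    then show "e' \<notin> set ts" unfolding MM_def by (auto split: if_splits)
  qed
  have t3: "\<forall>Z. (Z,t) \<in> bun \<longrightarrow> Z \<inter> set ts \<noteq> {}"
  proof (intro allI impI)
    fix Z assume c: "(Z,t) \<in> bun"
    have "1 \<le> MM E bun conf ts (PBun Z t)" using pre tE c by (auto simp: preset_mem)
    then show "Z \<inter> set ts \<noteq> {}" unfolding MM_def by (auto split: if_splits)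
  qed
  have g2: "good E bun conf (ts @ [t])" using good_snoc[OF g tE t1 t2 t3 bf(1)] .
  have gb: "\<And>i Z. i < length ts \<Longrightarrow> (Z, ts!i) \<in> bun \<Longrightarrow> Z \<inter> set (take i ts) \<noteq> {}"
    using g unfolding good_def by blast
  have gb2: "\<And>Z e. e \<in> set ts \<Longrightarrow> (Z, e) \<in> bun \<Longrightarrow> Z \<inter> set ts \<noteq> {}"
  proof -
    fix Z e assume "e \<in> set ts" "(Z, e) \<in> bun"
    then obtain i where "i < length ts" "ts!i = e" by (auto simp: in_set_conv_nth)
    then have "Z \<inter> set (take i ts) \<noteq> {}" using gb \<open>(Z,e) \<in> bun\<close> by blast
    then show "Z \<inter> set ts \<noteq> {}" using set_take_subset[of i ts] by blast
  qed
  have "fire (bes_net E bun conf) (MM E bun conf ts) t s = MM E bun conf (ts @ [t]) s" for s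
  proof (cases s)
    case (PPre e)
    then show ?thesis using tE t1 unfolding fire_def by (auto simp: preset_mem postset_mem MM_def)
  next
    case (PConf c)
    show ?thesis
    proof (cases "\<exists>e'. c = {t,e'} \<and> (t,e') \<in> conf")
      case True
      then show ?thesis using PConf tE t1 t2 unfolding fire_def by (auto simp: preset_mem postset_mem MM_def)
    next
      case False
      have "t \<notin> c \<or> \<not> (\<exists>e e'. c = {e,e'} \<and> (e,e') \<in> conf)"
        using False bf(1) by (auto simp: doubleton_eq_iff dest: symD)
      then show ?thesis using PConf tE False unfolding fire_def by (auto simp: preset_mem postset_mem MM_def)
    qed
  next
    case (PBun Y e)
    show ?thesis
    proof (cases "(Y,e) \<in> bun")
      case False
      then show ?thesis using PBun unfolding fire_def by (auto simp: preset_mem postset_mem MM_def)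
    next
      case True
      show ?thesis
      proof (cases "t \<in> Y")
        case tY: True
        have Yd: "Y \<inter> set ts = {}"
        proof (rule ccontr)
          assume "Y \<inter> set ts \<noteq> {}"
          then obtain y where "y \<in> Y" "y \<in> set ts" by blast
          then have "y \<noteq> t" "(t,y) \<in> conf" using t1 bf(4)[OF True tY] by auto
          then show False using t2 \<open>y \<in> set ts\<close> by blast
        qed
        have ne: "e \<notin> set ts" using gb2[OF _ True] Yd by blast
        have "e \<noteq> t"
        proof
          assume "e = t"
          then show False using t3 True Yd by blast
        qed
        then show ?thesis using PBun True tY Yd ne tE unfolding fire_def
          by (auto simp: preset_mem postset_mem MM_def)
      next
        case tY: False
        then show ?thesis using PBun True tE t1 t3 unfolding fire_def
          by (auto simp: preset_mem postset_mem MM_def)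
      qed
    qed
  next
    case (PPost e)
    then show ?thesis using tE t1 unfolding fire_def by (auto simp: preset_mem postset_mem MM_def)
  qed
  then show ?thesis using g2 by auto
qed

lemma fireseq_snoc:
  "fireseq N m (ts @ [t]) m' \<longleftrightarrow> (\<exists>m''. fireseq N m ts m'' \<and> enabled N m'' t \<and> m' = fire N m'' t)"
  by (induction ts arbitrary: m) auto

lemma fireseq_good:
  assumes bes: "bes E bun conf"
  shows "fireseq (bes_net E bun conf) (init (bes_net E bun conf)) ts m \<Longrightarrow>
     good E bun conf ts \<and> m = MM E bun conf ts"
proof (induction ts arbitrary: m rule: rev_induct)
  case Nil
  then show ?case by (simp add: init_MM good_def conflict_free_def)
next
  case (snoc t ts)
  then obtain m'' where "fireseq (bes_net E bun conf) (init (bes_net E bun conf)) ts m''"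
     "enabled (bes_net E bun conf) m'' t" "m = fire (bes_net E bun conf) m'' t"
    by (auto simp: fireseq_snoc)
  then show ?case using snoc.IH step[OF bes] by metis
qed

lemma good_enabled:
  assumes bes: "bes E bun conf" and g: "good E bun conf (ts @ [t])"
  shows "enabled (bes_net E bun conf) (MM E bun conf ts) t"
proof -
  note bf = bes_facts[OF bes]
  have d: "distinct (ts @ [t])" and sE: "set (ts @ [t]) \<subseteq> E" and cf: "conflict_free conf (set (ts @ [t]))"
    and bb: "\<forall>i<length (ts@[t]). \<forall>Z. (Z, (ts@[t])!i) \<in> bun \<longrightarrow> Z \<inter> set (take i (ts@[t])) \<noteq> {}"
    using g unfolding good_def by auto
  have t1: "t \<notin> set ts" "t \<in> E" using d sE by auto
  have t3: "\<And>Z. (Z,t) \<in> bun \<Longrightarrow> Z \<inter> set ts \<noteq> {}"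
    using bb[rule_format, of "length ts"] by auto
  have t2: "\<And>e'. (t,e') \<in> conf \<Longrightarrow> e' \<notin> set ts"
    using cf bf(2) unfolding conflict_free_def irrefl_def by auto
  have "\<And>s. s \<in> preset (bes_net E bun conf) t \<Longrightarrow> 1 \<le> MM E bun conf ts s"
  proof -
    fix s assume "s \<in> preset (bes_net E bun conf) t"
    then have "s = PPre t \<or> (\<exists>Y. s = PBun Y t \<and> (Y,t) \<in> bun) \<or> (\<exists>e'. s = PConf {t,e'} \<and> (t,e') \<in> conf)"
      by (simp add: preset_mem)
    then show "1 \<le> MM E bun conf ts s"
      using t1 t2 t3 by (auto simp: MM_def) blast
  qed
  then show ?thesis using t1 unfolding enabled_def by simp
qed

lemma good_fireseq:
  assumes bes: "bes E bun conf"
  shows "good E bun conf ts \<Longrightarrow> fireseq (bes_net E bun conf) (init (bes_net E bun conf)) ts (MM E bun conf ts)"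
proof (induction ts rule: rev_induct)
  case Nil
  then show ?case by (simp add: init_MM)
next
  case (snoc t ts)
  have g: "good E bun conf ts" using good_prefix[OF snoc.prems] .
  have en: "enabled (bes_net E bun conf) (MM E bun conf ts) t" using good_enabled[OF bes snoc.prems] .
  show ?case using snoc.IH[OF g] en step[OF bes g en] by (auto simp: fireseq_snoc)
qed

lemma states_good:
  assumes bes: "bes E bun conf"
  shows "states (bes_net E bun conf) = {mset ts | ts. good E bun conf ts}"
  unfolding states_def using fireseq_good[OF bes] good_fireseq[OF bes] by blast

lemma reachable_good:
  assumes bes: "bes E bun conf"
  shows "reachable (bes_net E bun conf) = {MM E bun conf ts | ts. good E bun conf ts}"
  unfolding reachable_def using fireseq_good[OF bes] good_fireseq[OF bes] by blast

lemma is_net_bes: "bes E bun conf \<Longrightarrow> is_net (bes_net E bun conf)"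
  unfolding is_net_def bes_net_def bes_def
  apply (intro conjI)
  apply (rule subsetI)
  apply (simp only: Un_iff mem_Collect_eq)
  apply (elim disjE exE conjE)
  apply (auto simp add: image_iff)[]
  apply (auto simp add: image_iff)[]
  done

lemma safe_bes: "bes E bun conf \<Longrightarrow> safe (bes_net E bun conf)"
proof -
  assume b: "bes E bun conf"
  have "\<And>ts s. MM E bun conf ts s \<le> 1" by (simp add: MM_def split: bplace.splits)
  then show ?thesis unfolding safe_def reachable_good[OF b] by blast
qed

lemma good_config:
  assumes "good E bun conf ts"
  shows "bes_config E bun conf (set ts)"
proof -
  have d: "distinct ts" and sE: "set ts \<subseteq> E" and cf: "conflict_free conf (set ts)"
    and bb: "\<forall>i<length ts. \<forall>Z. (Z, ts!i) \<in> bun \<longrightarrow> Z \<inter> set (take i ts) \<noteq> {}"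
    using assms unfolding good_def by auto
  have "bij_betw ((!) ts) {..<length ts} (set ts)" using bij_betw_nth[OF d] by simp
  moreover have "\<forall>i\<in>{..<length ts}. \<forall>Z. (Z, ts!i) \<in> bun \<longrightarrow> Z \<inter> (!) ts ` {..<i} \<noteq> {}"
  proof (intro ballI allI impI)
    fix i Z assume i: "i \<in> {..<length ts}" and "(Z, ts!i) \<in> bun"
    then have "Z \<inter> set (take i ts) \<noteq> {}" using bb by auto
    moreover have "set (take i ts) = (!) ts ` {..<i}" using i
      by (auto simp: set_conv_nth) (metis nth_take)
    ultimately show "Z \<inter> (!) ts ` {..<i} \<noteq> {}" by simp
  qed
  ultimately show ?thesis unfolding bes_config_def using sE cf
    by (intro conjI exI[of _ "(!) ts"] exI[of _ "{..<length ts}"]) auto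
qed

lemma down_closed_finite:
  assumes "finite (I::nat set)" "\<forall>i\<in>I. \<forall>j<i. j \<in> I"
  shows "\<exists>n. I = {..<n}"
proof (cases "I = {}")
  case True then show ?thesis by auto
next
  case False
  have "I = {..<Suc (Max I)}"
  proof
    show "I \<subseteq> {..<Suc (Max I)}" using assms(1) by (auto simp: less_Suc_eq_le)
    show "{..<Suc (Max I)} \<subseteq> I"
    proof
      fix j assume "j \<in> {..<Suc (Max I)}"
      then have "j \<le> Max I" by simp
      moreover have "Max I \<in> I" using assms(1) False by simp
      ultimately show "j \<in> I" using assms(2) by (cases "j = Max I") auto
    qed
  qed
  then show ?thesis by blast
qed

lemma config_good:
  fixes X :: "'e set"
  assumes "finite X" "bes_config E bun conf X"
  shows "\<exists>ts. good E bun conf ts \<and> set ts = X"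
proof -
  obtain f :: "nat \<Rightarrow> 'e" and I :: "nat set" where X: "X \<subseteq> E" "conflict_free conf X" and dc: "\<forall>i\<in>I. \<forall>j<i. j \<in> I"
    and bij: "bij_betw f I X" and bb: "\<forall>i\<in>I. \<forall>Z. (Z, f i) \<in> bun \<longrightarrow> Z \<inter> f ` {..<i} \<noteq> {}"
    using assms(2) unfolding bes_config_def by blast
  have "finite I" using bij_betw_finite[OF bij] assms(1) by simp
  then obtain n where I: "I = {..<n}" using down_closed_finite[OF _ dc] by blast
  define ts where "ts = map f [0..<n]"
  have len: "length ts = n" unfolding ts_def by simp
  have nth: "\<And>i. i < n \<Longrightarrow> ts!i = f i" unfolding ts_def by simp
  have inj: "inj_on f {..<n}" using bij I unfolding bij_betw_def by blast
  have fI: "f ` {..<n} = X" using bij_betw_imp_surj_on[OF bij] I by simp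
  have st: "set ts = X" unfolding ts_def using fI by (simp add: atLeast0LessThan)
  have d: "distinct ts" unfolding ts_def using inj
    by (simp add: distinct_map atLeast0LessThan)
  have tk: "\<And>i. i < n \<Longrightarrow> set (take i ts) = f ` {..<i}"
    unfolding ts_def by (simp add: take_map atLeast0LessThan)
  have "\<forall>i<length ts. \<forall>Z. (Z, ts!i) \<in> bun \<longrightarrow> Z \<inter> set (take i ts) \<noteq> {}"
  proof (intro allI impI)
    fix i Z assume i: "i < length ts" and "(Z, ts!i) \<in> bun"
    then have "(Z, f i) \<in> bun" "i \<in> I" using nth len I by auto
    then show "Z \<inter> set (take i ts) \<noteq> {}" using bb tk i len by auto
  qed
  then have "good E bun conf ts" unfolding good_def
    using d st X by simp
  then show ?thesis using st by blast
qed

lemma config_iff_state: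
  assumes bes: "bes E bun conf" and X: "finite X"
  shows "bes_config E bun conf X \<longleftrightarrow> mset_set X \<in> states (bes_net E bun conf)"
proof
  assume "bes_config E bun conf X"
  then obtain ts where g: "good E bun conf ts" and st: "set ts = X" using config_good X by blast
  have "mset ts = mset_set X" using mset_set_set[of ts] g st unfolding good_def by simp
  then show "mset_set X \<in> states (bes_net E bun conf)" using states_good[OF bes] g by auto
next
  assume "mset_set X \<in> states (bes_net E bun conf)"
  then obtain ts where g: "good E bun conf ts" and m: "mset ts = mset_set X"
    using states_good[OF bes] by auto
  have "set ts = X" using arg_cong[OF m, of set_mset] X by simp
  then show "bes_config E bun conf X" using good_config[OF g] by simp
qed

lemma subnet_flow:
  "x \<in> flow (subnet N T') \<Longrightarrow> x \<in> flow N \<and> x \<in> (range Inl \<times> Inr ` T') \<union> (Inr ` T' \<times> range Inl)"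
  unfolding subnet_def Let_def by auto

lemma flow_cases:
  assumes "(a,b) \<in> flow (bes_net E bun conf)"
  shows "(\<exists>s t. a = Inl s \<and> b = Inr t \<and> s \<in> preset (bes_net E bun conf) t) \<or>
         (\<exists>s t. a = Inr t \<and> b = Inl s \<and> s \<in> postset (bes_net E bun conf) t)"
proof (cases a; cases b)
  fix s t assume "a = Inl s" "b = Inr t" then show ?thesis using assms by (auto simp: preset_def)
next
  fix s t assume "a = Inr t" "b = Inl s" then show ?thesis using assms by (auto simp: postset_def)
next
  fix s t assume "a = Inl s" "b = Inl t" then show ?thesis using assms by (auto simp: bes_net_def)
next
  fix s t assume "a = Inr s" "b = Inr t" then show ?thesis using assms by (auto simp: bes_net_def)
qed

lemma antisym_rank:
  fixes rk :: "'a \<Rightarrow> nat"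
  assumes "\<And>a b. (a,b) \<in> r \<Longrightarrow> rk a < rk b"
  shows "antisym (r\<^sup>*)"
proof -
  have *: "(a,b) \<in> r\<^sup>* \<Longrightarrow> a = b \<or> rk a < rk b" for a b
    by (induction rule: rtrancl_induct) (auto dest: assms)
  show ?thesis
  proof (rule antisymI)
    fix a b assume "(a,b) \<in> r\<^sup>*" "(b,a) \<in> r\<^sup>*"
    then show "a = b" using *[of a b] *[of b a] by auto
  qed
qed

lemma subnet_conflict_free:
  assumes bes: "bes E bun conf" and g: "good E bun conf ts"
  shows "net_conflict_free (subnet (bes_net E bun conf) (set ts))"
  unfolding net_conflict_free_def
proof (intro ballI allI impI)
  fix s t1 t2
  assume a: "(Inl s, Inr t1) \<in> flow (subnet (bes_net E bun conf) (set ts)) \<and>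
             (Inl s, Inr t2) \<in> flow (subnet (bes_net E bun conf) (set ts))"
  then have p1: "s \<in> preset (bes_net E bun conf) t1" and p2: "s \<in> preset (bes_net E bun conf) t2"
    and i1: "t1 \<in> set ts" and i2: "t2 \<in> set ts"
    using subnet_flow[of "(Inl s, Inr t1)"] subnet_flow[of "(Inl s, Inr t2)"]
    by (auto simp: preset_def)
  have cf: "conflict_free conf (set ts)" using g unfolding good_def by simp
  show "t1 = t2"
  proof (rule ccontr)
    assume ne: "t1 \<noteq> t2"
    from p1 p2 ne have "(t1,t2) \<in> conf \<or> (t2,t1) \<in> conf"
      by (auto simp: preset_mem doubleton_eq_iff)
    moreover have "(t1,t2) \<notin> conf" "(t2,t1) \<notin> conf"
      using cf i1 i2 ne unfolding conflict_free_def by auto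
    ultimately show False by blast
  qed
qed

lemma subnet_acyclic:
  assumes bes: "bes E bun conf" and g: "good E bun conf ts"
  shows "net_acyclic (subnet (bes_net E bun conf) (set ts))"
proof -
  note bf = bes_facts[OF bes]
  have d: "distinct ts" and cf: "conflict_free conf (set ts)"
    and bb: "\<forall>i<length ts. \<forall>Z. (Z, ts!i) \<in> bun \<longrightarrow> Z \<inter> set (take i ts) \<noteq> {}"
    using g unfolding good_def by auto
  define p where "p e = (THE i. i < length ts \<and> ts!i = e)" for e
  have pp: "p e < length ts \<and> ts ! p e = e" if "e \<in> set ts" for e
    unfolding p_def using theI'[OF distinct_Ex1[OF d that]] .
  have lt: "p e < p e'" if "e \<in> set ts" "e' \<in> set ts" "e \<in> Y" "(Y,e') \<in> bun" for e e' Y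
  proof -
    have pe: "p e' < length ts" "ts ! p e' = e'" using pp[OF that(2)] by auto
    have "Y \<inter> set (take (p e') ts) \<noteq> {}" using bb[rule_format, of "p e'" Y] pe that(4) by simp
    then obtain y where y: "y \<in> Y" "y \<in> set (take (p e') ts)" by blast
    then obtain j where j0: "j < length (take (p e') ts)" "take (p e') ts ! j = y"
      unfolding in_set_conv_nth by blast
    have j: "j < p e'" "ts!j \<in> Y" using j0 y pe by auto
    have jl: "j < length ts" using j pe by simp
    have jm: "ts!j \<in> set ts" using jl by simp
    have "ts!j = e"
    proof (rule ccontr)
      assume nej: "ts!j \<noteq> e"
      then have "(ts!j, e) \<in> conf" using bf(4)[OF that(4) j(2) that(3)] by simp
      then show False using cf jm that(1) nej unfolding conflict_free_def by blast
    qed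
    then have "j = p e" using pp[OF that(1)] jl d nth_eq_iff_index_eq by metis
    then show ?thesis using j by simp
  qed
  define rk where "rk x = (case x of Inr e \<Rightarrow> 2 * p e + 1
     | Inl (PPre e) \<Rightarrow> 0 | Inl (PConf c) \<Rightarrow> 0 | Inl (PPost e) \<Rightarrow> 2 * p e + 2
     | Inl (PBun Y e) \<Rightarrow> (if e \<in> set ts then 2 * p e else 2 * length ts + 2))" for x
  have "rk a < rk b" if ab: "(a,b) \<in> flow (subnet (bes_net E bun conf) (set ts))" for a b
  proof -
    have fl: "(a,b) \<in> flow (bes_net E bun conf)"
      and tr: "(a,b) \<in> (range Inl \<times> Inr ` set ts) \<union> (Inr ` set ts \<times> range Inl)"
      using subnet_flow[OF ab] by auto
    from flow_cases[OF fl] show ?thesis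
    proof (elim disjE exE conjE)
      fix s t assume st: "a = Inl s" "b = Inr t" "s \<in> preset (bes_net E bun conf) t"
      then have "t \<in> set ts" using tr by auto
      then show ?thesis using st by (auto simp: preset_mem rk_def)
    next
      fix s t assume st: "a = Inr t" "b = Inl s" "s \<in> postset (bes_net E bun conf) t"
      then have ti: "t \<in> set ts" using tr by auto
      from st(3) have "s = PPost t \<or> (\<exists>Y e'. s = PBun Y e' \<and> (Y,e') \<in> bun \<and> t \<in> Y)"
        by (simp add: postset_mem)
      then show ?thesis
      proof (elim disjE exE conjE)
        assume "s = PPost t" then show ?thesis using st by (simp add: rk_def)
      next
        fix Y e' assume Y: "s = PBun Y e'" "(Y,e') \<in> bun" "t \<in> Y"
        show ?thesis
        proof (cases "e' \<in> set ts")
          case True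
          then show ?thesis using lt[OF ti True Y(3) Y(2)] st Y by (simp add: rk_def)
        next
          case False
          then show ?thesis using pp[OF ti] st Y by (simp add: rk_def)
        qed
      qed
    qed
  qed
  then show ?thesis unfolding net_acyclic_def by (rule antisym_rank)
qed

theorem mainTheorem3:
  fixes E :: "'e set" and bun :: "('e set \<times> 'e) set" and conf :: "'e rel"
  assumes "bes E bun conf"
    and "\<forall>e \<in> E. \<exists>X. finite X \<and> bes_config E bun conf X \<and> e \<in> X"
  shows "unravel_net (bes_net E bun conf) \<and>
         (\<forall>X. finite X \<and> X \<subseteq> E \<longrightarrow>
              (bes_config E bun conf X \<longleftrightarrow> mset_set X \<in> states (bes_net E bun conf)))"
proof -
  have A: "\<forall>X \<in> states (bes_net E bun conf). net_acyclic (subnet (bes_net E bun conf) (set_mset X)) \<and>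
                      net_conflict_free (subnet (bes_net E bun conf) (set_mset X))"
  proof
    fix X assume "X \<in> states (bes_net E bun conf)"
    then obtain ts where "good E bun conf ts" "X = mset ts" using states_good[OF assms(1)] by auto
    then show "net_acyclic (subnet (bes_net E bun conf) (set_mset X)) \<and>
                      net_conflict_free (subnet (bes_net E bun conf) (set_mset X))"
      using subnet_acyclic[OF assms(1)] subnet_conflict_free[OF assms(1)] by simp
  qed
  have B: "\<forall>t \<in> trans (bes_net E bun conf). \<exists>X \<in> states (bes_net E bun conf). t \<in># X"
  proof
    fix t assume "t \<in> trans (bes_net E bun conf)"
    then have "t \<in> E" by simp
    then have "\<exists>X. finite X \<and> bes_config E bun conf X \<and> t \<in> X" using assms(2) by (rule bspec[rotated])
    then obtain X where X: "finite X" "bes_config E bun conf X" "t \<in> X" by (elim exE conjE)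
    then have "mset_set X \<in> states (bes_net E bun conf)" using config_iff_state[OF assms(1) X(1)] by simp
    moreover have "t \<in># mset_set X" using X by simp
    ultimately show "\<exists>X \<in> states (bes_net E bun conf). t \<in># X" by (rule bexI[rotated])
  qed
  have U: "unravel_net (bes_net E bun conf)"
    unfolding unravel_net_def
    using is_net_bes[OF assms(1)] safe_bes[OF assms(1)] A B by (intro conjI)
  have C: "\<forall>X. finite X \<and> X \<subseteq> E \<longrightarrow>
              (bes_config E bun conf X \<longleftrightarrow> mset_set X \<in> states (bes_net E bun conf))"
    using config_iff_state[OF assms(1)] by simp
  show ?thesis using U C by (rule conjI)
qed

end
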